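(* Fix $\gamma \geq 1$ and $0 \leq \rho < 1$. Let $A(u,v) = (u,u+v)$, $\mathbf{1} = (1,1)$, $\mathbf{c} = (\gamma,1)$, and let $T,M:\mathbb{R}^2\to\mathbb{R}^2$ be defined by $$T\mathbf{x} = \begin{cases} A\mathbf{x} + \mathbf{1}, & \langle \mathbf{c},\mathbf{x}\rangle \leq -1/2,\\ A\mathbf{x}, & |\langle \mathbf{c},\mathbf{x}\rangle| < 1/2,\\ A\mathbf{x} - \mathbf{1}, & \langle \mathbf{c},\mathbf{x}\rangle \geq 1/2,\end{cases}\qquad M(u,v) = \begin{cases} T(\rho u,\rho v), & u \geq 0,\\ T(u,v), & u<0.\end{cases}$$ Let $S^+ = \{(u,v) : -1/2 \leq \gamma u + v \leq 1/2 + \gamma,\ 0 \leq u < 1\}$, $S^- = \{(u,v) : -(1/2+\gamma) \leq \gamma u + v \leq 1/2,\ -1 \leq u < 0\}$, and $S = S^+\cup S^-$. If $\mathbf{x}_0 \in S$, then the iterates $\mathbf{x}_n = M^n\mathbf{x}_0$ eventually remain in $S^+$ (there exists $N$ with $\mathbf{x}_n \in S^+$ for all $n \geq N$), and $\|\mathbf{x}_n\| \to 0$ as $n \to \infty$.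
   Context: $\langle\cdot,\cdot\rangle$ is the standard inner product on $\mathbb{R}^2$. *)

theory Defs
  imports "HOL-Analysis.Analysis"
begin

definition A_map :: "real \<times> real \<Rightarrow> real \<times> real" where
  "A_map x = (fst x, fst x + snd x)"

definition T_map :: "real \<Rightarrow> real \<times> real \<Rightarrow> real \<times> real" where
  "T_map \<gamma> x =
    (let s = (\<gamma>, 1) \<bullet> x; y = A_map x in
     if s \<le> -1/2 then y + (1, 1)
     else if \<bar>s\<bar> < 1/2 then y
     else y - (1, 1))"

definition M_map :: "real \<Rightarrow> real \<Rightarrow> real \<times> real \<Rightarrow> real \<times> real" where
  "M_map \<gamma> \<rho> x =
    (if fst x \<ge> 0 then T_map \<gamma> (\<rho> *\<^sub>R x) else T_map \<gamma> x)"

definition S_plus :: "real \<Rightarrow> (real \<times> real) set" where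
  "S_plus \<gamma> = {(u, v). -1/2 \<le> \<gamma> * u + v \<and> \<gamma> * u + v \<le> 1/2 + \<gamma> \<and> 0 \<le> u \<and> u < 1}"

definition S_minus :: "real \<Rightarrow> (real \<times> real) set" where
  "S_minus \<gamma> = {(u, v). -(1/2 + \<gamma>) \<le> \<gamma> * u + v \<and> \<gamma> * u + v \<le> 1/2 \<and> -1 \<le> u \<and> u < 0}"

definition S_set :: "real \<Rightarrow> (real \<times> real) set" where
  "S_set \<gamma> = S_plus \<gamma> \<union> S_minus \<gamma>"

end

theory Submission
  imports Defs
begin
lemma e1: fixes g r w :: real
  assumes g: "g \<ge> 1" and r: "0 \<le> r" "r < 1" and w: "0 \<le> w" 
    and s3: "3*w + g - 5/2 < -1/2" and rs3: "r*(3*w+g-5/2) \<le> -1/2"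
  shows "r*(r*(w - (5/2 - g - 3*w)) + g + 1) \<ge> 1/2"
proof -
  have "r*(3*w+g-5/2) \<ge> r * (-3/2)" using r g w by (intro mult_left_mono) auto
  hence r3: "3*r \<ge> 1" using rs3 by linarith
  have A: "r*(r*(w - (5/2 - g - 3*w)) + g + 1) - 1/2 = 4*(r*r*w) + (g-1)*(r*r+r) + (3*r-1)*(1-r)/2"
    by (simp add: field_simps)
  have "r*r*w \<ge> 0" using r w by simp
  moreover have "(g-1)*(r*r+r) \<ge> 0" using g r by simp
  moreover have "(3*r-1)*(1-r) \<ge> 0" using r3 r by simp
  ultimately show ?thesis using A by linarith
qed
lemma e2: fixes g r w :: real
  assumes g: "g \<ge> 1" and r: "0 \<le> r" "r < 1" and w: "0 \<le> w" 
    and s3: "3*w + g - 5/2 < -1/2" and rs3: "r*(3*w+g-5/2) \<le> -1/2"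
    and u5: "r*r*w + r - 1 \<ge> 0"
  shows "-1/2 \<le> r*r*(5*w+g-5/2) + r*(g+2) - (g+1)"
proof -
  have w1: "w \<le> 1" using s3 g by linarith
  have "r*r*w \<le> r*r*1" using w1 r by (intro mult_left_mono) auto
  hence P: "r*r+r-1 \<ge> 0" using u5 by linarith
  have A: "r*r*(5*w+g-5/2) + r*(g+2) - (g+1) + 1/2 = (g-1)*(r*r+r-1) + (r*r+r-1) + 5*(r*r*w) - 5/2*(r*r) + 2*r - 1/2"
    by (simp add: field_simps)
  have "(g-1)*(r*r+r-1) \<ge> 0" using g P by simp
  moreover have "(1-r)*(7+3*r) \<ge> 0" using r by simp
  moreover have "(1-r)*(7+3*r) = 7 - 4*r - 3*(r*r)" by (simp add: field_simps)
  ultimately show ?thesis using A u5 by linarith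
qed
lemma e3: fixes g r w :: real
  assumes g: "g \<ge> 1" and r: "0 \<le> r" "r < 1" and w: "0 \<le> w" 
    and s3: "3*w + g - 5/2 < -1/2" and rs3: "r*(3*w+g-5/2) \<le> -1/2"
  shows "r*r*(5*w+g-5/2) + r*(g+2) - (g+1) \<le> 1/2 + g"
proof -
  have a: "5*w+g-5/2 \<le> 1/6" using s3 g w by linarith
  have "r*r*(5*w+g-5/2) \<le> r*r*(1/6)" using a r by (intro mult_left_mono) auto
  moreover have "r*r \<le> 1" using r by (simp add: mult_le_one)
  moreover hence "r*r*(1/6) \<le> 1/6" by simp
  moreover have "r*(g+2) \<le> g+2" using mult_right_mono[of r 1 "g+2"] r g by simp
  ultimately have "r*r*(5*w+g-5/2) \<le> 1/6" "r*(g+2) \<le> g+2" by linarith+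
  thus ?thesis using g by linarith
qed
lemma e4: fixes g r w :: real
  assumes g: "g \<ge> 1" and r: "0 \<le> r" "r < 1" and w: "0 \<le> w" 
    and s3: "3*w + g - 5/2 < -1/2" and rs3: "r*(3*w+g-5/2) \<le> -1/2"
  shows "-(1/2+g) \<le> r*r*(5*w+g-5/2) + r*(g+2) - (g+1)"
proof -
  have "r*(3*w+g-5/2) \<ge> r * (-3/2)" using r g w by (intro mult_left_mono) auto
  hence r3: "3*r \<ge> 1" using rs3 by linarith
  have A: "r*r*(5*w+g-5/2) + r*(g+2) - (g+1) + (1/2+g) = 5*(r*r*w) + (g-1)*(r*r+r) + (3*r-1)*(1-r)/2 + r"
    by (simp add: field_simps)
  have "r*r*w \<ge> 0" using r w by simp
  moreover have "(g-1)*(r*r+r) \<ge> 0" using g r by simp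
  moreover have "(3*r-1)*(1-r) \<ge> 0" using r3 r by simp
  ultimately show ?thesis using A r by linarith
qed
lemma e5: fixes g r w :: real
  assumes g: "g \<ge> 1" and r: "0 \<le> r" "r < 1" and w: "0 \<le> w" 
    and s3: "3*w + g - 5/2 < -1/2" and rs3: "r*(3*w+g-5/2) \<le> -1/2"
    and u5: "r*r*w + r - 1 < 0"
  shows "r*r*(5*w+g-5/2) + r*(g+2) - (g+1) < 1/2"
proof -
  define X where "X = 5*r/2 - 3*r*w - 1/2"
  have rgX: "r*g \<le> X" using rs3 unfolding X_def by (simp add: field_simps)
  show ?thesis
  proof (cases "r < 3/4")
    case True
    have "(r*g)*(r+1) \<le> X*(r+1)" using rgX r by (intro mult_right_mono) auto
    moreover have "(r*w)*(3-2*r) \<ge> 0" using r w by simp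
    moreover have "r*r*(5*w+g-5/2) + r*(g+2) - (g+1) - 1/2 = (r*g)*(r+1) - g + 5*(r*r*w) - 5/2*(r*r) + 2*r - 3/2"
      by (simp add: field_simps)
    moreover have "X*(r+1) = 5/2*(r*r) + 2*r - 3*(r*r*w) - 3*(r*w) - 1/2" unfolding X_def by (simp add: field_simps)
    moreover have "(r*w)*(3-2*r) = 3*(r*w) - 2*(r*r*w)" by (simp add: field_simps)
    ultimately show ?thesis using True g by linarith
  next
    case False
    define P where "P = r*r+r-1"
    have "r*r \<ge> 3/4*(3/4)" using False by (intro mult_mono) auto
    hence P0: "P \<ge> 0" unfolding P_def using False by linarith
    have F1: "r*((r*g)*P) \<le> r*(X*P)" using rgX P0 r by (intro mult_left_mono mult_right_mono) auto
    have Q: "2*r*r-3*r+3 > 0" proof -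
      have "2*r*r-3*r+3 = 2*(r-3/4)^2 + 15/8" by (simp add: algebra_simps power2_eq_square)
      moreover have "(r-3/4)^2 \<ge> 0" by simp
      ultimately show ?thesis by linarith
    qed
    have F2: "(r*r*w)*(2*r*r-3*r+3) < (1-r)*(2*r*r-3*r+3)" using u5 Q by (intro mult_strict_right_mono) auto
    have F3: "(1-r)*((r-3/4)*(2*r+4)) \<ge> 0" using False r by simp
    have I1: "r*r*(r*r*(5*w+g-5/2) + r*(g+2) - (g+1) - 1/2) = r*((r*g)*P) + r*r*(5*(r*r*w) - 5/2*(r*r) + 2*r - 3/2)"
      unfolding P_def by (simp add: field_simps)
    have I2: "r*(X*P) + r*r*(5*(r*r*w) - 5/2*(r*r) + 2*r - 3/2) = r*(r-1)*(8*r-1)/2 + (r*r*w)*(2*r*r-3*r+3)"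
      unfolding P_def X_def by (simp add: field_simps)
    have I3: "r*(r-1)*(8*r-1)/2 + (1-r)*(2*r*r-3*r+3) = - ((1-r)*((r-3/4)*(2*r+4)))"
      by (simp add: field_simps)
    have "r*r*(r*r*(5*w+g-5/2) + r*(g+2) - (g+1) - 1/2) < 0"
      using I1 I2 I3 F1 F2 F3 by linarith
    moreover have "r*r > 0" using False by simp
    ultimately show ?thesis by (simp add: mult_less_0_iff)
  qed
qed
definition TT :: "real \<Rightarrow> real \<Rightarrow> real \<Rightarrow> real \<times> real" where
 "TT g p q = (if g*p+q \<le> -1/2 then (p+1,p+q+1) else if \<bar>g*p+q\<bar> < 1/2 then (p,p+q) else (p-1,p+q-1))"
lemma M_eq: "M_map g r (u,v) = (if u \<ge> 0 then TT g (r*u) (r * v) else TT g u v)"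
  by (simp add: M_map_def T_map_def A_map_def Let_def TT_def)

definition Sm' :: "real \<Rightarrow> (real \<times> real) set" where
 "Sm' g = {(u, v). -(1/2 + g) \<le> g * u + v \<and> g * u + v < 1/2 \<and> -1 \<le> u \<and> u < 0}"
definition Sp' :: "real \<Rightarrow> (real \<times> real) set" where
 "Sp' g = S_plus g \<union> Sm' g"

lemma TT_plus: "g*p+q \<le> -1/2 \<Longrightarrow> TT g p q = (p+1,p+q+1)" by (simp add: TT_def)
lemma TT_zero: "\<bar>g*p+q\<bar> < 1/2 \<Longrightarrow> TT g p q = (p,p+q)" by (auto simp: TT_def)
lemma TT_minus: "g*p+q \<ge> 1/2 \<Longrightarrow> TT g p q = (p-1,p+q-1)" by (simp add: TT_def)
lemma M_neg: "u < 0 \<Longrightarrow> M_map g r (u,v) = TT g u v" by (simp add: M_eq)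
lemma M_pos: "u \<ge> 0 \<Longrightarrow> M_map g r (u,v) = TT g (r*u) (r * v)" by (simp add: M_eq)

lemma edge:
  fixes g r w :: real
  assumes g: "g \<ge> 1" and r: "0 \<le> r" "r < 1" and w: "0 \<le> w" "w < 1"
  shows "\<exists>m. (M_map g r ^^ m) (w-1, 1/2 - g*(w-1)) \<in> Sp' g"
proof -
  define u where "u = w - 1"
  define v where "v = 1/2 - g*u"
  have x0: "(w - 1, 1/2 - g*(w-1)) = (u,v)" by (simp add: u_def v_def)
  have x1: "M_map g r (u,v) = (u-1, u+v-1)"
    using w g by (simp add: M_neg u_def TT_minus v_def)
  have x2: "M_map g r (u-1,u+v-1) = (u, 2*u+v-1)"
  proof -
    have "g*(u-1)+(u+v-1) \<le> -1/2" using w g unfolding v_def u_def by (simp add: algebra_simps)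
    thus ?thesis using w by (simp add: M_neg u_def TT_plus)
  qed
  have f2: "(M_map g r ^^ 2) (u,v) = (u, 2*u+v-1)" using x1 x2 by (simp add: numeral_2_eq_2)
  show ?thesis
  proof (cases "-(1/2+g) \<le> 2*u - 1/2")
    case True
    have "(u, 2*u+v-1) \<in> Sp' g" using True w g unfolding Sp'_def Sm'_def v_def u_def by (auto simp: algebra_simps)
    thus ?thesis using f2 by (intro exI[of _ 2]) (simp only: x0)
  next
    case c2: False
    have x3: "M_map g r (u, 2*u+v-1) = (w, 3*u+v)"
    proof -
      have "g*u+(2*u+v-1) \<le> -1/2" using c2 w g unfolding v_def u_def by (simp add: algebra_simps)
      thus ?thesis using w by (simp add: M_neg u_def TT_plus)
    qed
    have f3: "(M_map g r ^^ 3) (u,v) = (w, 3*u+v)" using f2 x3 by (simp add: numeral_3_eq_3 numeral_2_eq_2)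
    have s3e: "g*w + (3*u+v) = 3*w+g-5/2" unfolding v_def u_def by (simp add: algebra_simps)
    show ?thesis
    proof (cases "3*w+g-5/2 \<ge> -1/2")
      case True
      have "(w, 3*u+v) \<in> Sp' g" using True s3e w g unfolding Sp'_def S_plus_def u_def v_def by (auto simp: algebra_simps)
      thus ?thesis using f3 by (intro exI[of _ 3]) (simp only: x0)
    next
      case c3: False
      have "g*(r*w) + r*(3*u+v) = r*(g*w+(3*u+v))" by (simp add: algebra_simps)
      hence rs: "g*(r*w) + r*(3*u+v) = r*(3*w+g-5/2)" using s3e by simp
      show ?thesis
      proof (cases "r*(3*w+g-5/2) > -1/2")
        case True
        have "r*(3*w+g-5/2) \<le> 0" using c3 r by (simp add: mult_nonneg_nonpos)
        hence x4: "M_map g r (w, 3*u+v) = (r*w, r*w + r*(3*u+v))"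
          using True w rs by (simp add: M_pos TT_zero)
        have f4: "(M_map g r ^^ 4) (u,v) = (r*w, r*w + r*(3*u+v))"
          using f3 x4 by (simp add: eval_nat_numeral)
        have "r*w \<le> 1*w" using r w by (intro mult_right_mono) auto
        hence rw1: "r*w < 1" using w by simp
        have "r*w \<ge> 0" using r w by simp
        hence "(r*w, r*w + r*(3*u+v)) \<in> Sp' g"
          using rw1 True rs \<open>r*(3*w+g-5/2) \<le> 0\<close> g
          unfolding Sp'_def S_plus_def by (auto simp: algebra_simps)
        thus ?thesis using f4 by (intro exI[of _ 4]) (simp only: x0)
      next
        case False
        define a where "a = r*w+1"
        define b where "b = r*w + r*(3*u+v) + 1"
        have x4: "M_map g r (w, 3*u+v) = (a, b)"
          using False w rs by (simp add: M_pos TT_plus a_def b_def)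
        have f4: "(M_map g r ^^ 4) (u,v) = (a,b)"
          using f3 x4 by (simp add: eval_nat_numeral)
        have "g*a+b = r*(g*w+(3*u+v)) + r*w + g + 1" unfolding a_def b_def by (simp add: algebra_simps)
        hence "g*a+b = r*(3*w+g-5/2) + r*w + g + 1" using s3e by simp
        hence s4: "g*a+b = r*(w - (5/2 - g - 3*w)) + g + 1" by (simp add: algebra_simps)
        have "g*(r*a) + r*b = r*(g*a+b)" by (simp add: algebra_simps)
        hence rs4: "g*(r*a) + r*b \<ge> 1/2" using s4 e1[OF g r w(1)] c3 False by simp
        have a0: "a \<ge> 0" unfolding a_def using r w by simp
        have x5: "M_map g r (a, b) = (r*a-1, r*a+r*b-1)"
          using a0 rs4 by (simp add: M_pos TT_minus)
        have f5: "(M_map g r ^^ 5) (u,v) = (r*a-1, r*a+r*b-1)"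
          using f4 x5 by (simp add: eval_nat_numeral)
        have u5: "r*a-1 = r*r*w + r - 1" unfolding a_def by (simp add: algebra_simps)
        have "g*(r*a-1) + (r*a+r*b-1) = r*(g*a+b) + r*a - g - 1" by (simp add: algebra_simps)
        also have "\<dots> = r*(r*(w - (5/2 - g - 3*w)) + g + 1) + r*a - g - 1" by (simp only: s4)
        also have "\<dots> = r*r*(5*w+g-5/2) + r*(g+2) - (g+1)" unfolding a_def by (simp add: algebra_simps)
        finally have s5: "g*(r*a-1) + (r*a+r*b-1) = r*r*(5*w+g-5/2) + r*(g+2) - (g+1)" .
        have "r*r \<le> 1" using r by (simp add: mult_le_one)
        hence "r*r*w \<le> 1" using w r by (intro mult_le_one) auto
        have c3': "3*w+g-5/2 < -1/2" using c3 by simp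
        have F': "r*(3*w+g-5/2) \<le> -1/2" using False by simp
        have "(r*a-1, r*a+r*b-1) \<in> Sp' g"
        proof (cases "r*r*w + r - 1 \<ge> 0")
          case True
          have "(r*a-1, r*a+r*b-1) \<in> S_plus g"
            unfolding S_plus_def mem_Collect_eq case_prod_conv s5 unfolding u5
            using e2[OF g r w(1) c3' F' True] e3[OF g r w(1) c3' F'] True \<open>r*r*w \<le> 1\<close> r by linarith
          thus ?thesis unfolding Sp'_def by simp
        next
          case False
          hence F2: "r*r*w + r - 1 < 0" by simp
          have "r*r*w \<ge> 0" using r w by simp
          hence "(r*a-1, r*a+r*b-1) \<in> Sm' g"
            unfolding Sm'_def mem_Collect_eq case_prod_conv s5 unfolding u5
            using e4[OF g r w(1) c3' F'] e5[OF g r w(1) c3' F' F2] F2 r by linarith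
          thus ?thesis unfolding Sp'_def by simp
        qed
        thus ?thesis using f5 by (intro exI[of _ 5]) (simp only: x0)
      qed
    qed
  qed
qed
definition ut :: "real \<times> real \<Rightarrow> real" where
  "ut x = (if fst x \<ge> 0 then fst x else fst x + 1)"
definition VV :: "real \<Rightarrow> real \<times> real \<Rightarrow> real" where
  "VV g x = (if fst x \<ge> 0 then g * fst x + snd x else g * fst x + snd x + fst x + g + 1)"

lemma stepP:
  fixes g r u v :: real
  assumes g: "g \<ge> 1" and r: "0 \<le> r" "r < 1" and x: "(u,v) \<in> S_plus g"
  shows "M_map g r (u,v) \<in> Sp' g \<and> ut (M_map g r (u,v)) = r*u \<and> VV g (M_map g r (u,v)) \<le> r*(g*u+v) + r*u"
proof -
  define s where "s = g*u+v"
  from x have u: "0 \<le> u" "u < 1" and s: "-1/2 \<le> s" "s \<le> 1/2+g" unfolding S_plus_def s_def by auto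
  have ru: "r*u \<ge> 0" "r*u \<le> u" using r u by (auto simp: mult_left_le_one_le)
  have rs1: "r* s \<ge> r * (- 1/2)" using r s by (intro mult_left_mono) auto
  have "r * (- 1/2) > -1/2" using r by simp
  hence rs2: "r* s > -1/2" using rs1 by linarith
  have "r* s \<le> r*(1/2+g)" using r s by (intro mult_left_mono) auto
  moreover have "r*(1/2+g) < 1*(1/2+g)" using r g by (intro mult_strict_right_mono) auto
  ultimately have rs3: "r* s < 1/2+g" by simp
  have eq: "g*(r*u) + r * v = r* s" unfolding s_def by (simp add: algebra_simps)
  show ?thesis
  proof (cases "r* s < 1/2")
    case True
    hence "\<bar>g*(r*u) + r * v\<bar> < 1/2" unfolding abs_less_iff using eq rs2 by linarith
    hence y: "M_map g r (u,v) = (r*u, r*u + r * v)" using u by (simp add: M_pos TT_zero)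
    have s': "g*(r*u) + (r*u + r * v) = r* s + r*u" using eq by simp
    have "(r*u, r*u + r * v) \<in> S_plus g"
      unfolding S_plus_def mem_Collect_eq case_prod_conv s' using ru u rs2 True g by linarith
    moreover have "VV g (r*u, r*u + r * v) = r* s + r*u" using ru s' by (simp add: VV_def)
    ultimately show ?thesis using y ru unfolding Sp'_def s_def by (simp add: ut_def)
  next
    case False
    hence y: "M_map g r (u,v) = (r*u-1, r*u + r * v - 1)" using u eq by (simp add: M_pos TT_minus)
    have s': "g*(r*u-1) + (r*u + r * v - 1) = r* s + r*u - g - 1" using eq by (simp add: algebra_simps)
    have "(r*u-1, r*u + r * v - 1) \<in> Sm' g"
      unfolding Sm'_def mem_Collect_eq case_prod_conv s' using ru u rs3 False g by linarith
    moreover have "VV g (r*u-1, r*u + r * v - 1) = r* s + 2*(r*u) - 1" using ru u s' 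
      by (simp add: VV_def algebra_simps)
    ultimately show ?thesis using y ru u unfolding Sp'_def s_def by (simp add: ut_def)
  qed
qed

lemma stepN:
  fixes g r u v :: real
  assumes g: "g \<ge> 1" and x: "(u,v) \<in> Sm' g"
  shows "M_map g r (u,v) \<in> Sp' g \<and> ut (M_map g r (u,v)) = ut (u,v) \<and>
    (fst (M_map g r (u,v)) \<ge> 0 \<longrightarrow> VV g (M_map g r (u,v)) = VV g (u,v)) \<and>
    (fst (M_map g r (u,v)) < 0 \<longrightarrow> VV g (M_map g r (u,v)) = VV g (u,v) + u)"
proof -
  from x have u: "-1 \<le> u" "u < 0" and s: "-(1/2+g) \<le> g*u+v" "g*u+v < 1/2" unfolding Sm'_def by auto
  show ?thesis
  proof (cases "g*u+v \<le> -1/2")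
    case True
    hence y: "M_map g r (u,v) = (u+1, u+v+1)" using u by (simp add: M_neg TT_plus)
    have s': "g*(u+1) + (u+v+1) = (g*u+v) + u + g + 1" by (simp add: algebra_simps)
    have "(u+1, u+v+1) \<in> S_plus g"
      unfolding S_plus_def mem_Collect_eq case_prod_conv s' using u s True g by linarith
    thus ?thesis using y u unfolding Sp'_def by (simp add: ut_def VV_def algebra_simps)
  next
    case False
    hence "\<bar>g*u+v\<bar> < 1/2" unfolding abs_less_iff using s by linarith
    hence y: "M_map g r (u,v) = (u, u+v)" using u by (simp add: M_neg TT_zero)
    have s': "g*u + (u+v) = (g*u+v) + u" by (simp add: algebra_simps)
    have "(u, u+v) \<in> Sm' g"
      unfolding Sm'_def mem_Collect_eq case_prod_conv s' using u s False g by linarith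
    thus ?thesis using y u unfolding Sp'_def by (simp add: ut_def VV_def algebra_simps)
  qed
qed

definition ZZ :: "real \<Rightarrow> real \<Rightarrow> real \<times> real \<Rightarrow> real" where
  "ZZ g r y = 6/(1-r)^2 * ut y + VV g y + (if fst y < 0 then (1-r)^2/4 else 0)"

lemma decrease:
  fixes g r b :: real and x :: "real \<times> real"
  assumes g: "g \<ge> 1" and r: "0 \<le> r" "r < 1" and x: "x \<in> Sp' g" and b: "ut x \<le> b" "b < 1"
    and H: "fst x \<ge> 0 \<Longrightarrow> fst x > (1-r)/2 \<or> VV g x > 1/2"
  shows "M_map g r x \<in> Sp' g \<and> ut (M_map g r x) \<le> ut x \<and>
         ZZ g r (M_map g r x) \<le> ZZ g r x - min ((1-r)^2/4) (1-b)"
proof -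
  obtain u v where xe: "x = (u,v)" by (cases x)
  define C where "C = 6/(1-r)^2"
  define e where "e = (1-r)^2/4"
  define y where "y = M_map g r (u,v)"
  have e0: "e \<ge> 0" "e \<le> 1/4" unfolding e_def using r by (auto simp: power2_eq_square mult_le_one)
  have C0: "C > 0" unfolding C_def using r by simp
  have Z: "\<And>z. ZZ g r z = C * ut z + VV g z + (if fst z < 0 then e else 0)" unfolding ZZ_def C_def e_def by simp
  show ?thesis
  proof (cases "u \<ge> 0")
    case True
    hence xp: "(u,v) \<in> S_plus g" using x unfolding xe Sp'_def Sm'_def by auto
    from xp have u: "u < 1" and s: "-1/2 \<le> g*u+v" unfolding S_plus_def by auto
    have st: "y \<in> Sp' g" "ut y = r*u" "VV g y \<le> r*(g*u+v) + r*u" using stepP[OF g r xp] unfolding y_def by auto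
    have Zx: "ZZ g r (u,v) = C*u + (g*u+v)" using True by (simp add: Z ut_def VV_def)
    have Zy: "ZZ g r y \<le> C*(r*u) + r*(g*u+v) + r*u + e" using st e0 by (simp add: Z)
    have ru: "r*u \<ge> 0" "r*u \<le> u" using r True by (auto simp: mult_left_le_one_le)
    have id1: "C*u - C*(r*u) = C*(1-r)*u" by (simp add: algebra_simps)
    have id2: "(g*u+v) - r*(g*u+v) = (1-r)*(g*u+v)" by (simp add: algebra_simps)
    have "C*(1-r)*u \<ge> 0" using C0 r True by simp
    have dec: "ZZ g r (u,v) - ZZ g r y \<ge> e"
    proof (cases "u > (1-r)/2")
      case True
      have "C*(1-r)*((1-r)/2) = 6/(1-r)^2 * (1-r)^2 / 2" unfolding C_def by (simp add: power2_eq_square)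
      also have "\<dots> = 3" using r by simp
      finally have "C*(1-r)*((1-r)/2) = 3" .
      moreover have "C*(1-r)*((1-r)/2) \<le> C*(1-r)*u" using True C0 r by (intro mult_left_mono) auto
      moreover have "(1-r)*(g*u+v) \<ge> (1-r)*(-1/2)" using s r by (intro mult_left_mono) auto
      moreover have "(1-r)*(- 1/2) \<ge> -1/2" using r by simp
      moreover have "r*u \<le> 1" using ru u by simp
      ultimately show ?thesis using Zx Zy id1 id2 e0 by linarith
    next
      case False
      hence V: "g*u+v > 1/2" using H[unfolded xe] \<open>u\<ge>0\<close> by (simp add: VV_def)
      have "(1-r)*(g*u+v) \<ge> (1-r)*(1/2)" using V r by (intro mult_left_mono) auto
      moreover have "r*u \<le> r*((1-r)/2)" using False r by (intro mult_left_mono) auto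
      moreover have "(1-r)*(1/2) - r*((1-r)/2) = 2*e" unfolding e_def by (simp add: power2_eq_square field_simps)
      ultimately show ?thesis using Zx Zy id1 id2 e0 \<open>C*(1-r)*u \<ge> 0\<close> by linarith
    qed
    have "ut y \<le> ut (u,v)" using st ru True by (simp add: ut_def)
    thus ?thesis using st dec unfolding xe y_def e_def by (simp add: min_le_iff_disj)
  next
    case False
    hence xm: "(u,v) \<in> Sm' g" using x unfolding xe Sp'_def S_plus_def by auto
    have st: "y \<in> Sp' g" "ut y = ut (u,v)" "fst y \<ge> 0 \<Longrightarrow> VV g y = VV g (u,v)"
       "fst y < 0 \<Longrightarrow> VV g y = VV g (u,v) + u" using stepN[OF g xm, of r] unfolding y_def by auto
    have ub: "u + 1 \<le> b" using b False unfolding xe by (simp add: ut_def)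
    have Zx: "ZZ g r (u,v) = C * ut (u,v) + VV g (u,v) + e" using False by (simp add: Z)
    have "ZZ g r y \<le> ZZ g r (u,v) - min e (1-b)"
    proof (cases "fst y \<ge> 0")
      case True
      thus ?thesis using st Zx by (simp add: Z)
    next
      case False
      hence "ZZ g r y = ZZ g r (u,v) + u" using st Zx by (simp add: Z)
      thus ?thesis using ub by linarith
    qed
    thus ?thesis using st unfolding xe y_def e_def by simp
  qed
qed

lemma inv_step:
  assumes g: "g \<ge> 1" and r: "0 \<le> r" "r < 1" and x: "x \<in> Sp' g"
  shows "M_map g r x \<in> Sp' g \<and> ut (M_map g r x) \<le> ut x"
proof -
  obtain u v where xe: "x = (u,v)" by (cases x)
  show ?thesis
  proof (cases "u \<ge> 0")
    case True
    hence xp: "(u,v) \<in> S_plus g" using x unfolding xe Sp'_def Sm'_def by auto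
    have "r*u \<le> u" using r True by (simp add: mult_left_le_one_le)
    thus ?thesis using stepP[OF g r xp] True unfolding xe by (simp add: ut_def)
  next
    case False
    hence xm: "(u,v) \<in> Sm' g" using x unfolding xe Sp'_def S_plus_def by auto
    show ?thesis using stepN[OF g xm, of r] unfolding xe by simp
  qed
qed

lemma ut_bounds: "x \<in> Sp' g \<Longrightarrow> 0 \<le> ut x \<and> ut x < 1"
  by (cases x) (auto simp: Sp'_def S_plus_def Sm'_def ut_def)

lemma ZZ_lower:
  assumes r: "r < 1" and x: "x \<in> Sp' g"
  shows "ZZ g r x \<ge> -1/2"
proof -
  obtain u v where xe: "x = (u,v)" by (cases x)
  have "ut x \<ge> 0" using ut_bounds[OF x] by simp
  moreover have "6/(1-r)^2 \<ge> 0" by simp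
  ultimately have a: "6/(1-r)^2 * ut x \<ge> 0" by simp
  have "VV g x \<ge> -1/2" using x unfolding xe by (auto simp: Sp'_def S_plus_def Sm'_def VV_def)
  moreover have "(if fst x < 0 then (1-r)^2/4 else 0) \<ge> (0::real)" by simp
  ultimately show ?thesis using a unfolding ZZ_def by linarith
qed

lemma descent:
  fixes Z :: "nat \<Rightarrow> real"
  assumes "\<And>k. Z (Suc k) \<le> Z k - d" "d > 0" "\<And>k. Z k \<ge> L"
  shows False
proof -
  have "\<And>k. Z k \<le> Z 0 - real k * d"
  proof -
    fix k show "Z k \<le> Z 0 - real k * d"
      by (induction k) (use assms(1) in \<open>auto simp: algebra_simps\<close>, smt (verit) assms(1))
  qed
  moreover obtain k where "Z 0 - L < real k * d" using reals_Archimedean3[OF assms(2)] by blast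
  ultimately show False using assms(3)[of k] by (smt (verit))
qed

definition GG :: "real \<Rightarrow> real \<Rightarrow> (real \<times> real) set" where
  "GG g r = {(u,v). 0 \<le> u \<and> u \<le> (1-r)/2 \<and> -1/2 \<le> g*u+v \<and> g*u+v \<le> 1/2}"
definition phi :: "real \<Rightarrow> real \<Rightarrow> real \<times> real \<Rightarrow> real" where
  "phi g r x = \<bar>g * fst x + snd x\<bar> + 2/(1-r) * fst x"

lemma G_step:
  assumes g: "g \<ge> 1" and r: "0 \<le> r" "r < 1" and x: "x \<in> GG g r"
  shows "M_map g r x \<in> GG g r \<and> phi g r (M_map g r x) \<le> (1+r)/2 * phi g r x"
proof -
  obtain u v where xe: "x = (u,v)" by (cases x)
  define s where "s = g*u+v"
  from x have u: "0 \<le> u" "u \<le> (1-r)/2" and s: "-1/2 \<le> s" "s \<le> 1/2" unfolding xe GG_def s_def by auto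
  have eq: "g*(r*u) + r * v = r * s" unfolding s_def by (simp add: algebra_simps)
  have "\<bar>s\<bar> \<le> 1/2" unfolding abs_le_iff using s by linarith
  hence "r*\<bar>s\<bar> \<le> r*(1/2)" using r by (intro mult_left_mono) auto
  hence rs: "\<bar>r * s\<bar> \<le> r * (1/2)" using r by (simp add: abs_mult)
  have "r*(1/2) < 1/2" using r by simp
  hence "\<bar>g*(r*u) + r * v\<bar> < 1/2" using eq rs by linarith
  hence y: "M_map g r (u,v) = (r*u, r*u + r * v)" using u by (simp add: M_pos TT_zero)
  have s': "g*(r*u) + (r*u + r * v) = r * s + r*u" using eq by simp
  have ru: "0 \<le> r*u" "r*u \<le> r*((1-r)/2)" using r u by (simp, intro mult_left_mono, auto)
  have ru2: "r*u \<le> u" using r u by (simp add: mult_left_le_one_le)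
  have k1: "r*((1-r)/2) + r*(1/2) \<le> 1/2"
  proof -
    have "r*((1-r)/2) + r*(1/2) = 1/2 - (1-r)^2/2" by (simp add: power2_eq_square field_simps)
    thus ?thesis by simp
  qed
  have mem: "(r*u, r*u + r * v) \<in> GG g r"
  proof -
    have a: "-(r*(1/2)) \<le> r * s" "r * s \<le> r*(1/2)" using rs unfolding abs_le_iff by linarith+
    have "r*(1/2) \<le> 1/2" using r by simp
    thus ?thesis unfolding GG_def mem_Collect_eq case_prod_conv s' using ru ru2 u a k1 by linarith
  qed
  define K where "K = 2/(1-r)"
  have K: "K*(1-r) = 2" unfolding K_def using r by (simp add: field_simps)
  have phx: "phi g r (u,v) = \<bar>s\<bar> + K*u" unfolding phi_def K_def s_def by simp
  have phy: "phi g r (r*u, r*u + r * v) = \<bar>r * s + r*u\<bar> + K*(r*u)" unfolding phi_def K_def using s' by simp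
  have t1: "\<bar>r * s + r*u\<bar> \<le> r*\<bar>s\<bar> + r*u" using r ru by (simp add: abs_mult abs_triangle_ineq[THEN order_trans])
  have "(1+r)/2 * (\<bar>s\<bar> + K*u) - (r*\<bar>s\<bar> + r*u + K*(r*u)) = (1-r)/2*\<bar>s\<bar> + (K*(1-r)/2 - r)*u"
    by (simp add: field_simps)
  also have "\<dots> = (1-r)/2*\<bar>s\<bar> + (1-r)*u" using K by simp
  also have "\<dots> \<ge> 0" using r u by simp
  finally have f: "0 \<le> (1+r)/2 * (\<bar>s\<bar> + K*u) - (r*\<bar>s\<bar> + r*u + K*(r*u))" .
  have "(1+r)/2 * phi g r (u,v) = (1+r)/2 * (\<bar>s\<bar> + K*u)" by (simp only: phx)
  hence "phi g r (r*u, r*u + r * v) \<le> (1+r)/2 * phi g r (u,v)" using f phy t1 by linarith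
  thus ?thesis using mem y unfolding xe by simp
qed

lemma G_norm:
  assumes g: "g \<ge> 1" and r: "0 \<le> r" "r < 1" and x: "x \<in> GG g r"
  shows "norm x \<le> (1+g) * phi g r x"
proof -
  obtain u v where xe: "x = (u,v)" by (cases x)
  from x have u: "0 \<le> u" unfolding xe GG_def by auto
  have "norm (u,v) \<le> norm u + norm v" by (rule norm_Pair_le)
  also have "\<dots> = \<bar>u\<bar> + \<bar>(g*u+v) - g*u\<bar>" by simp
  also have "\<dots> \<le> u + \<bar>g*u+v\<bar> + g*u"
  proof -
    have gu: "g*u \<ge> 0" using u g by simp
    show ?thesis using u gu by (smt (verit))
  qed
  also have "\<dots> \<le> (1+g) * (\<bar>g*u+v\<bar> + 2/(1-r) * u)"
  proof -
    have "2/(1-r) \<ge> 1" using r by simp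
    hence "u \<le> 2/(1-r) * u" using u by (metis mult_1 mult_right_mono)
    hence "(1+g)*u \<le> (1+g)*(2/(1-r) * u)" using g by (intro mult_left_mono) auto
    moreover have "\<bar>g*u+v\<bar> \<le> (1+g)*\<bar>g*u+v\<bar>" using g by (simp add: mult_le_cancel_right1)
    ultimately show ?thesis by (simp add: algebra_simps)
  qed
  finally show ?thesis unfolding xe phi_def by simp
qed

theorem proposition4:
  fixes \<gamma> \<rho> :: real and x0 :: "real \<times> real"
  assumes "\<gamma> \<ge> 1" and "0 \<le> \<rho>" and "\<rho> < 1"
    and "x0 \<in> S_set \<gamma>"
  shows "(\<exists>N. \<forall>n\<ge>N. (M_map \<gamma> \<rho> ^^ n) x0 \<in> S_plus \<gamma>)
       \<and> ((\<lambda>n. norm ((M_map \<gamma> \<rho> ^^ n) x0)) \<longlonglongrightarrow> 0)"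
proof -
  note g = assms(1) and r = assms(2,3)
  let ?M = "M_map \<gamma> \<rho>"
  obtain m0 where m0: "(?M ^^ m0) x0 \<in> Sp' \<gamma>"
  proof (cases "x0 \<in> Sp' \<gamma>")
    case True
    thus ?thesis using that[of 0] by simp
  next
    case False
    obtain u v where xe: "x0 = (u,v)" by (cases x0)
    from False assms(4) have "x0 \<in> S_minus \<gamma>" unfolding S_set_def Sp'_def by auto
    with False have u: "-1 \<le> u" "u < 0" and s: "\<gamma>*u+v = 1/2"
      unfolding xe S_minus_def Sp'_def Sm'_def by auto
    have "x0 = ((u+1)-1, 1/2 - \<gamma>*((u+1)-1))" using s unfolding xe by simp
    moreover have "\<exists>m. (?M ^^ m) ((u+1)-1, 1/2 - \<gamma>*((u+1)-1)) \<in> Sp' \<gamma>"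
      using u by (intro edge[OF g r]) auto
    ultimately show ?thesis using that by metis
  qed
  define x1 where "x1 = (?M ^^ m0) x0"
  define b where "b = ut x1"
  have b1: "b < 1" using ut_bounds m0 unfolding b_def x1_def by blast
  have inv: "\<And>k. (?M ^^ k) x1 \<in> Sp' \<gamma> \<and> ut ((?M ^^ k) x1) \<le> b"
  proof -
    fix k show "(?M ^^ k) x1 \<in> Sp' \<gamma> \<and> ut ((?M ^^ k) x1) \<le> b"
    proof (induction k)
      case 0 thus ?case using m0 unfolding x1_def b_def by simp
    next
      case (Suc k)
      thus ?case using inv_step[OF g r, of "(?M ^^ k) x1"] by auto
    qed
  qed
  have "\<exists>k. fst ((?M ^^ k) x1) \<ge> 0 \<and> fst ((?M ^^ k) x1) \<le> (1-\<rho>)/2 \<and> VV \<gamma> ((?M ^^ k) x1) \<le> 1/2"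
  proof (rule ccontr)
    assume "\<not> ?thesis"
    hence H: "\<And>k. fst ((?M ^^ k) x1) \<ge> 0 \<Longrightarrow> fst ((?M ^^ k) x1) > (1-\<rho>)/2 \<or> VV \<gamma> ((?M ^^ k) x1) > 1/2"
      by (meson not_le)
    define d where "d = min ((1-\<rho>)^2/4) (1-b)"
    have d0: "d > 0" unfolding d_def using r b1 by simp
    show False
    proof (rule descent[of "\<lambda>k. ZZ \<gamma> \<rho> ((?M ^^ k) x1)" d "-1/2"])
      fix k
      have "ZZ \<gamma> \<rho> (?M ((?M ^^ k) x1)) \<le> ZZ \<gamma> \<rho> ((?M ^^ k) x1) - d"
        using decrease[OF g r _ _ b1 H] inv unfolding d_def by blast
      thus "ZZ \<gamma> \<rho> ((?M ^^ Suc k) x1) \<le> ZZ \<gamma> \<rho> ((?M ^^ k) x1) - d" by simp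
    next
      show "d > 0" by (rule d0)
    next
      fix k show "ZZ \<gamma> \<rho> ((?M ^^ k) x1) \<ge> -1/2" using ZZ_lower[OF r(2)] inv by blast
    qed
  qed
  then obtain k where k: "fst ((?M ^^ k) x1) \<ge> 0" "fst ((?M ^^ k) x1) \<le> (1-\<rho>)/2"
    "VV \<gamma> ((?M ^^ k) x1) \<le> 1/2" by blast
  define z0 where "z0 = (?M ^^ k) x1"
  have z0G: "z0 \<in> GG \<gamma> \<rho>"
  proof -
    obtain u v where ze: "z0 = (u,v)" by (cases z0)
    have "z0 \<in> Sp' \<gamma>" using inv unfolding z0_def by blast
    thus ?thesis using k unfolding z0_def[symmetric] ze by (auto simp: Sp'_def S_plus_def Sm'_def GG_def VV_def)
  qed
  have G: "\<And>j. (?M ^^ j) z0 \<in> GG \<gamma> \<rho> \<and> phi \<gamma> \<rho> ((?M ^^ j) z0) \<le> ((1+\<rho>)/2)^j * phi \<gamma> \<rho> z0"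
  proof -
    fix j show "(?M ^^ j) z0 \<in> GG \<gamma> \<rho> \<and> phi \<gamma> \<rho> ((?M ^^ j) z0) \<le> ((1+\<rho>)/2)^j * phi \<gamma> \<rho> z0"
    proof (induction j)
      case 0 thus ?case using z0G by simp
    next
      case (Suc j)
      have st: "?M ((?M ^^ j) z0) \<in> GG \<gamma> \<rho>" "phi \<gamma> \<rho> (?M ((?M ^^ j) z0)) \<le> (1+\<rho>)/2 * phi \<gamma> \<rho> ((?M ^^ j) z0)"
        using G_step[OF g r, of "(?M ^^ j) z0"] Suc by auto
      have "(1+\<rho>)/2 * phi \<gamma> \<rho> ((?M ^^ j) z0) \<le> (1+\<rho>)/2 * (((1+\<rho>)/2)^j * phi \<gamma> \<rho> z0)"
        using Suc r by (intro mult_left_mono) auto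
      thus ?case using st by (simp add: algebra_simps)
    qed
  qed
  define N where "N = k + m0"
  have shift: "\<And>j. (?M ^^ (j + N)) x0 = (?M ^^ j) z0"
    unfolding N_def z0_def x1_def by (simp add: funpow_add add.assoc)
  have GS: "GG \<gamma> \<rho> \<subseteq> S_plus \<gamma>" using g r unfolding GG_def S_plus_def by auto
  have part1: "\<forall>n\<ge>N. (?M ^^ n) x0 \<in> S_plus \<gamma>"
  proof (intro allI impI)
    fix n assume "n \<ge> N"
    hence "n = (n - N) + N" by simp
    hence "(?M ^^ n) x0 = (?M ^^ (n-N)) z0" using shift by metis
    thus "(?M ^^ n) x0 \<in> S_plus \<gamma>" using G GS by auto
  qed
  have "(\<lambda>j. norm ((?M ^^ (j + N)) x0)) \<longlonglongrightarrow> 0"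
  proof (rule Lim_null_comparison)
    show "\<forall>\<^sub>F j in sequentially. norm (norm ((?M ^^ (j + N)) x0)) \<le> (1+\<gamma>) * phi \<gamma> \<rho> z0 * ((1+\<rho>)/2)^j"
    proof (intro always_eventually allI)
      fix j
      have "norm ((?M ^^ (j + N)) x0) \<le> (1+\<gamma>) * phi \<gamma> \<rho> ((?M ^^ j) z0)"
        unfolding shift using G_norm[OF g r] G by blast
      also have "\<dots> \<le> (1+\<gamma>) * (((1+\<rho>)/2)^j * phi \<gamma> \<rho> z0)"
        using G g by (intro mult_left_mono) auto
      finally show "norm (norm ((?M ^^ (j + N)) x0)) \<le> (1+\<gamma>) * phi \<gamma> \<rho> z0 * ((1+\<rho>)/2)^j"
        by (simp add: algebra_simps)
    qed
    have "(\<lambda>j. ((1+\<rho>)/2)^j) \<longlonglongrightarrow> 0" using r by (intro LIMSEQ_realpow_zero) auto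
    thus "(\<lambda>j. (1+\<gamma>) * phi \<gamma> \<rho> z0 * ((1+\<rho>)/2)^j) \<longlonglongrightarrow> 0"
      by (intro tendsto_mult_right_zero)
  qed
  hence "(\<lambda>n. norm ((?M ^^ n) x0)) \<longlonglongrightarrow> 0" by (rule LIMSEQ_offset)
  thus ?thesis using part1 by blast
qed
end
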